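(* Let $g\geq 2$, $h$ and $t$ be integers with $2\leq t\leq \log h/\log g$. Then there exists a partition $\mathbb{N}=W_0\cup\cdots\cup W_{h-1}$ (into pairwise disjoint sets) such that each set $W_r$ ($0\le r\le h-1$) is a union of infinitely many intervals of at least $t$ consecutive integers, and $$A=A_g(W_0)\cup\cdots\cup A_g(W_{h-1})$$ is not a minimal asymptotic basis of order $h$.
   Context: $\mathbb{N}$ denotes the set of all nonnegative integers. For a nonempty $W\subseteq\mathbb{N}$ and an integer $g\ge 2$, $A_g(W)$ is the set of all numbers of the form $\sum_{f\in F}a_f g^f$, where $F$ is a finite nonempty subset of $W$ and $1\le a_f\le g-1$ for each $f\in F$. For $A\subseteq\mathbb{N}$ and $h\ge 2$, let $r_h(A,n)$ be the number of $h$-tuples $(a_1,\dots,a_h)\in A^h$ with $a_1+\cdots+a_h=n$. The set $A$ is an asymptotic basis of order $h$ if $r_h(A,n)\ge 1$ for all sufficiently large integers $n$. An asymptotic basis $A$ of order $h$ is minimal if no proper subset of $A$ is an asymptotic basis of order $h$. *)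

theory Defs
  imports Complex_Main
begin

definition A_g :: "nat \<Rightarrow> nat set \<Rightarrow> nat set" where
  "A_g g W = {(\<Sum>f\<in>F. a f * g ^ f) | F a. finite F \<and> F \<noteq> {} \<and> F \<subseteq> W \<and>
                 (\<forall>f\<in>F. 1 \<le> a f \<and> a f \<le> g - 1)}"

definition rep :: "nat \<Rightarrow> nat set \<Rightarrow> nat \<Rightarrow> nat" where
  "rep h A n = card {xs :: nat list. length xs = h \<and> set xs \<subseteq> A \<and> sum_list xs = n}"

definition asymptotic_basis :: "nat \<Rightarrow> nat set \<Rightarrow> bool" where
  "asymptotic_basis h A \<longleftrightarrow> (\<exists>N. \<forall>n\<ge>N. rep h A n \<ge> 1)"

definition minimal_asymptotic_basis :: "nat \<Rightarrow> nat set \<Rightarrow> bool" where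
  "minimal_asymptotic_basis h A \<longleftrightarrow>
     asymptotic_basis h A \<and> (\<forall>B. B \<subset> A \<longrightarrow> \<not> asymptotic_basis h B)"

definition union_of_long_intervals :: "nat \<Rightarrow> nat set \<Rightarrow> bool" where
  "union_of_long_intervals t W \<longleftrightarrow>
     (\<exists>\<I> :: nat set set. infinite \<I> \<and> \<Union>\<I> = W \<and>
        (\<forall>I\<in>\<I>. \<exists>a l. t \<le> l \<and> I = {a..<a + l}) \<and>
        (\<forall>I\<in>\<I>. \<forall>J\<in>\<I>. I \<noteq> J \<longrightarrow> I \<inter> J = {}))"

end

theory Submission
  imports Defs "HOL-Library.Infinite_Set"
begin

definition A0 :: "nat \<Rightarrow> nat set \<Rightarrow> nat set" where
  "A0 g W = insert 0 (A_g g W)"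

lemma A_g_pos: assumes "y \<in> A_g g W" shows "y \<ge> 1"
proof -
  from assms obtain F a where F: "finite F" "F \<noteq> {}" "F \<subseteq> W" "\<forall>f\<in>F. 1 \<le> a f \<and> a f \<le> g - 1"
    and y: "y = (\<Sum>f\<in>F. a f * g ^ f)" unfolding A_g_def by blast
  from F obtain f where f: "f \<in> F" by blast
  have "g \<ge> 2" using F f by (cases "g < 2") auto
  have "1 \<le> a f * g ^ f" using F f \<open>g \<ge> 2\<close> by simp
  also have "\<dots> \<le> y" unfolding y using F f by (intro member_le_sum) auto
  finally show ?thesis .
qed

lemma mono_in_A: assumes "f \<in> W" "1 \<le> c" "c \<le> g - 1" shows "c * g ^ f \<in> A_g g W"
  unfolding A_g_def
  apply (rule CollectI)
  apply (rule exI[of _ "{f}"])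
  apply (rule exI[of _ "\<lambda>_. c"])
  using assms by auto

lemma mono_add:
  assumes g: "g \<ge> 2" and y: "y \<in> A0 g W" and yb: "y < g ^ s" and s: "s \<in> W" and c: "c < g"
  shows "y + c * g ^ s \<in> A0 g W"
proof (cases "c = 0")
  case True then show ?thesis using y by simp
next
  case False
  show ?thesis
  proof (cases "y = 0")
    case True
    then show ?thesis using mono_in_A[OF s, of c g] False c by (simp add: A0_def)
  next
    case yn: False
    then have "y \<in> A_g g W" using y by (simp add: A0_def)
    then obtain F a where F: "finite F" "F \<noteq> {}" "F \<subseteq> W" "\<forall>f\<in>F. 1 \<le> a f \<and> a f \<le> g - 1"
      and yy: "y = (\<Sum>f\<in>F. a f * g ^ f)" unfolding A_g_def by blast
    have sF: "s \<notin> F"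
    proof
      assume "s \<in> F"
      then have "a s * g ^ s \<le> y" unfolding yy using F by (intro member_le_sum) auto
      moreover have "a s \<ge> 1" using F \<open>s \<in> F\<close> by auto
      ultimately have "g ^ s \<le> y" by (metis dual_order.trans mult_1 mult_le_mono1)
      then show False using yb by simp
    qed
    define a' where "a' = a(s := c)"
    have "(\<Sum>f\<in>insert s F. a' f * g ^ f) = c * g ^ s + (\<Sum>f\<in>F. a' f * g ^ f)"
      using F sF by (simp add: a'_def)
    also have "(\<Sum>f\<in>F. a' f * g ^ f) = y" unfolding yy a'_def
      by (rule sum.cong) (use sF in auto)
    finally have eq: "y + c * g ^ s = (\<Sum>f\<in>insert s F. a' f * g ^ f)" by simp
    have "y + c * g ^ s \<in> A_g g W" unfolding eq A_g_def
      apply (rule CollectI)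
      apply (rule exI[of _ "insert s F"])
      apply (rule exI[of _ a'])
      using F s False c by (auto simp: a'_def)
    then show ?thesis by (simp add: A0_def)
  qed
qed

lemma block_add:
  assumes g: "g \<ge> 2"
  shows "y \<in> A0 g W \<Longrightarrow> y < g ^ s \<Longrightarrow> (\<forall>i<k. s + i \<in> W) \<Longrightarrow> d < g ^ k \<Longrightarrow>
     y + d * g ^ s \<in> A0 g W \<and> y + d * g ^ s < g ^ (s + k)"
proof (induction k arbitrary: d)
  case 0
  then show ?case by simp
next
  case (Suc k)
  define d' where "d' = d mod g ^ k"
  define c where "c = d div g ^ k"
  have d'b: "d' < g ^ k" unfolding d'_def using g by simp
  have cb: "c < g" unfolding c_def using Suc.prems(4) g
    by (simp add: less_mult_imp_div_less mult.commute)
  have IH: "y + d' * g ^ s \<in> A0 g W \<and> y + d' * g ^ s < g ^ (s + k)"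
    using Suc.IH[OF Suc.prems(1,2) _ d'b] Suc.prems(3) by auto
  have dd: "d = d' + c * g ^ k" unfolding d'_def c_def using mod_div_mult_eq[of d "g ^ k"] by simp
  have eq: "y + d * g ^ s = (y + d' * g ^ s) + c * g ^ (s + k)"
    unfolding dd by (simp add: algebra_simps power_add)
  have m: "(y + d' * g ^ s) + c * g ^ (s + k) \<in> A0 g W"
    using mono_add[OF g _ _ _ cb] IH Suc.prems(3) by auto
  have "(y + d' * g ^ s) + c * g ^ (s + k) < g ^ (s + k) + c * g ^ (s + k)" using IH by simp
  also have "\<dots> = (c + 1) * g ^ (s + k)" by simp
  also have "\<dots> \<le> g * g ^ (s + k)" using cb by (intro mult_le_mono1) simp
  finally have "(y + d' * g ^ s) + c * g ^ (s + k) < g ^ (s + Suc k)" by simp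
  then show ?case using m eq by (simp add: add.assoc)
qed

definition lab :: "nat \<Rightarrow> nat \<Rightarrow> nat" where
  "lab h k = (if k \<le> 1 \<or> even k then 0 else 1 + ((k - 3) div 2) mod (h - 1))"

definition Wp :: "nat \<Rightarrow> nat \<Rightarrow> nat \<Rightarrow> nat set" where
  "Wp h t r = {f. lab h (f div t) = r}"

lemma lab_lt: "h \<ge> 2 \<Longrightarrow> lab h k < h"
proof -
  assume h: "h \<ge> 2"
  have "((k - 3) div 2) mod (h - 1) < h - 1" using h by simp
  then have "1 + ((k - 3) div 2) mod (h - 1) < h" by linarith
  then show ?thesis unfolding lab_def using h by auto
qed

lemma lab_nz: "lab h k \<noteq> 0 \<Longrightarrow> k \<ge> 3 \<and> odd k \<and> lab h (k - 1) = 0"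
proof -
  assume a: "lab h k \<noteq> 0"
  then have k: "\<not> k \<le> 1" "odd k" unfolding lab_def by (auto split: if_splits)
  then have "k \<ge> 3" by presburger
  moreover have "even (k - 1)" using k by simp
  ultimately show ?thesis using k unfolding lab_def by auto
qed

lemma not_dvd_x: "(g::nat) \<ge> 2 \<Longrightarrow> \<not> g dvd (1 + g)"
  by (metis dvd_add_left_iff dvd_refl nat_dvd_1_iff_1 numeral_le_one_iff semiring_norm(69))

lemma mono_in_B:
  assumes g: "g \<ge> 2" and h: "h \<ge> 2" and c: "1 \<le> c" "c \<le> g - 1"
  shows "c * g ^ f \<in> (\<Union>r<h. A_g g (Wp h t r)) - {1 + g}"
proof -
  have "f \<in> Wp h t (lab h (f div t))" by (simp add: Wp_def)
  then have "c * g ^ f \<in> A_g g (Wp h t (lab h (f div t)))" using mono_in_A c by blast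
  moreover have "c * g ^ f \<noteq> 1 + g"
  proof (cases f)
    case 0 then show ?thesis using c by simp
  next
    case (Suc m)
    then have "g dvd c * g ^ f" by simp
    then show ?thesis using not_dvd_x[OF g] by metis
  qed
  ultimately show ?thesis using lab_lt[OF h] by blast
qed

lemma split_B:
  assumes g: "g \<ge> 2" and h: "h \<ge> 2"
    and b: "b \<in> (\<Union>r<h. A_g g (Wp h t r)) - {1 + g}" and b2: "b \<ge> 2"
  shows "\<exists>b1 b2. b1 \<in> (\<Union>r<h. A_g g (Wp h t r)) - {1 + g} \<and>
                 b2 \<in> (\<Union>r<h. A_g g (Wp h t r)) - {1 + g} \<and> b = b1 + b2"
proof -
  let ?B = "(\<Union>r<h. A_g g (Wp h t r)) - {1 + g}"
  from b obtain r where r: "r < h" and br: "b \<in> A_g g (Wp h t r)" and bx: "b \<noteq> 1 + g" by blast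
  from br obtain F a where F: "finite F" "F \<noteq> {}" "F \<subseteq> Wp h t r" "\<forall>f\<in>F. 1 \<le> a f \<and> a f \<le> g - 1"
    and bb: "b = (\<Sum>f\<in>F. a f * g ^ f)" unfolding A_g_def by blast
  define f0 where "f0 = Min F"
  have f0F: "f0 \<in> F" using F by (simp add: f0_def)
  show ?thesis
  proof (cases "F - {f0} = {}")
    case False
    define b1 where "b1 = a f0 * g ^ f0"
    define b2 where "b2 = (\<Sum>f\<in>F - {f0}. a f * g ^ f)"
    have eq: "b = b1 + b2" unfolding bb b1_def b2_def using sum.remove[OF F(1) f0F, of "\<lambda>f. a f * g ^ f"] by simp
    have b1B: "b1 \<in> ?B" unfolding b1_def using mono_in_B[OF g h, of "a f0" f0] F(4) f0F by blast
    have b2A: "b2 \<in> A_g g (Wp h t r)" unfolding A_g_def b2_def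
      apply (rule CollectI)
      apply (rule exI[of _ "F - {f0}"])
      apply (rule exI[of _ a])
      using F False by auto
    have "g dvd b2" unfolding b2_def
    proof (rule dvd_sum)
      fix f assume "f \<in> F - {f0}"
      then have "f \<in> F" "f \<noteq> f0" by auto
      moreover have "f0 \<le> f" using F(1) \<open>f \<in> F\<close> unfolding f0_def by simp
      ultimately have "f > f0" by simp
      then show "g dvd a f * g ^ f" by (cases f) auto
    qed
    then have "b2 \<noteq> 1 + g" using not_dvd_x[OF g] by metis
    then have "b2 \<in> ?B" using b2A r by blast
    then show ?thesis using b1B eq by blast
  next
    case True
    then have Fs: "F = {f0}" using f0F by auto
    then have bm: "b = a f0 * g ^ f0" using bb by simp
    have a1: "1 \<le> a f0" "a f0 \<le> g - 1" using F f0F by auto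
    show ?thesis
    proof (cases "a f0 \<ge> 2")
      case True
      have "b = (a f0 - 1) * g ^ f0 + 1 * g ^ f0" using bm True by (simp add: diff_mult_distrib)
      moreover have "(a f0 - 1) * g ^ f0 \<in> ?B" using mono_in_B[OF g h, of "a f0 - 1" f0] True a1 by simp
      moreover have "1 * g ^ f0 \<in> ?B" using mono_in_B[OF g h, of 1 f0] g by simp
      ultimately show ?thesis by blast
    next
      case False
      then have "a f0 = 1" using a1 by simp
      then have bm': "b = g ^ f0" using bm by simp
      then obtain m where m: "f0 = Suc m" using b2 by (cases f0) auto
      have "b = (g - 1) * g ^ m + 1 * g ^ m" using bm' m g by (simp add: diff_mult_distrib)
      moreover have "(g - 1) * g ^ m \<in> ?B" using mono_in_B[OF g h, of "g - 1" m] g by simp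
      moreover have "1 * g ^ m \<in> ?B" using mono_in_B[OF g h, of 1 m] g by simp
      ultimately show ?thesis by blast
    qed
  qed
qed

lemma pad:
  assumes g: "g \<ge> 2" and h: "h \<ge> 2"
  shows "set xs \<subseteq> (\<Union>r<h. A_g g (Wp h t r)) - {1 + g} \<Longrightarrow> length xs \<le> h \<Longrightarrow> h \<le> sum_list xs \<Longrightarrow>
    \<exists>ys. length ys = h \<and> set ys \<subseteq> (\<Union>r<h. A_g g (Wp h t r)) - {1 + g} \<and> sum_list ys = sum_list xs"
proof (induction "h - length xs" arbitrary: xs)
  case 0
  then have "length xs = h" by simp
  then show ?case using "0.prems"(1) by blast
next
  case (Suc k)
  let ?B = "(\<Union>r<h. A_g g (Wp h t r)) - {1 + g}"
  have "\<exists>y\<in>set xs. y \<ge> 2"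
  proof (rule ccontr)
    assume "\<not> ?thesis"
    then have "\<forall>y\<in>set xs. y \<le> 1" by auto
    then have "sum_list xs \<le> length xs"
    proof (induction xs)
      case Nil then show ?case by simp
    next
      case (Cons a xs) then show ?case by simp
    qed
    then show False using Suc.prems(3) Suc.hyps by linarith
  qed
  then obtain y where y: "y \<in> set xs" "y \<ge> 2" by blast
  then obtain us ws where xs: "xs = us @ y # ws" by (meson split_list)
  have yB: "y \<in> ?B" using y(1) Suc.prems(1) by blast
  obtain b1 b2 where bs: "b1 \<in> ?B" "b2 \<in> ?B" "y = b1 + b2"
    using split_B[OF g h yB y(2)] by blast
  define zs where "zs = us @ b1 # b2 # ws"
  have z1: "set zs \<subseteq> ?B" using Suc.prems(1) bs unfolding zs_def xs by simp
  have z2: "length zs = Suc (length xs)" unfolding zs_def xs by simp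
  have z3: "sum_list zs = sum_list xs" unfolding zs_def xs using bs by simp
  have "k = h - length zs" using z2 Suc.hyps by simp
  moreover have "length zs \<le> h" using z2 Suc.hyps by simp
  ultimately obtain ys where "length ys = h \<and> set ys \<subseteq> ?B \<and> sum_list ys = sum_list zs"
    using Suc.hyps(1)[of zs] z1 z3 Suc.prems(3) by metis
  then show ?case using z3 by metis
qed

definition blk :: "nat \<Rightarrow> nat \<Rightarrow> nat \<Rightarrow> nat \<Rightarrow> nat" where
  "blk g t n k = (n div g ^ (t * k)) mod g ^ t"

lemma expand: "(\<Sum>k<J. blk g t n k * g ^ (t * k)) = n mod g ^ (t * J)"
proof (induction J)
  case 0 then show ?case by simp
next
  case (Suc J)
  have "n mod g ^ (t * Suc J) = n mod (g ^ (t * J) * g ^ t)" by (simp add: power_add mult.commute)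
  also have "\<dots> = g ^ (t * J) * (n div g ^ (t * J) mod g ^ t) + n mod g ^ (t * J)"
    by (rule mod_mult2_eq)
  finally show ?case using Suc by (simp add: blk_def mult.commute)
qed

lemma blk_lt: "g \<ge> 2 \<Longrightarrow> blk g t n k < g ^ t"
  unfolding blk_def by simp

definition Pc :: "nat \<Rightarrow> nat \<Rightarrow> nat \<Rightarrow> nat \<Rightarrow> nat \<Rightarrow> nat \<Rightarrow> nat" where
  "Pc g h t n r J = (\<Sum>k\<in>{k\<in>{..<J}. lab h k = r}. blk g t n k * g ^ (t * k))"

lemma Pc_mem:
  assumes g: "g \<ge> 2" and t: "t \<ge> 1"
  shows "Pc g h t n r J \<in> A0 g (Wp h t r) \<and> Pc g h t n r J < g ^ (t * J)"
proof (induction J)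
  case 0 then show ?case by (simp add: Pc_def A0_def)
next
  case (Suc J)
  show ?case
  proof (cases "lab h J = r")
    case True
    have set: "{k\<in>{..<Suc J}. lab h k = r} = insert J {k\<in>{..<J}. lab h k = r}" using True by auto
    have eq: "Pc g h t n r (Suc J) = Pc g h t n r J + blk g t n J * g ^ (t * J)"
      unfolding Pc_def set by simp
    have W: "\<forall>i<t. t * J + i \<in> Wp h t r" using True t by (simp add: Wp_def)
    have "Pc g h t n r J + blk g t n J * g ^ (t * J) \<in> A0 g (Wp h t r) \<and>
          Pc g h t n r J + blk g t n J * g ^ (t * J) < g ^ (t * J + t)"
      using block_add[OF g, of "Pc g h t n r J" "Wp h t r" "t * J" t "blk g t n J"] Suc W blk_lt[OF g]
      by blast
    then show ?thesis using eq by (simp add: add.commute)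
  next
    case False
    have set: "{k\<in>{..<Suc J}. lab h k = r} = {k\<in>{..<J}. lab h k = r}" using False less_Suc_eq by auto
    have eq: "Pc g h t n r (Suc J) = Pc g h t n r J" unfolding Pc_def set by simp
    have "g ^ (t * J) \<le> g ^ (t * Suc J)" using g by (intro power_increasing) auto
    then show ?thesis using eq Suc by simp
  qed
qed

lemma Pc_sum:
  assumes h: "h \<ge> 2"
  shows "(\<Sum>r<h. Pc g h t n r J) = (\<Sum>k<J. blk g t n k * g ^ (t * k))"
  unfolding Pc_def
  by (rule sum.group) (use lab_lt[OF h] in auto)

lemma Pc_dvd:
  assumes "r \<noteq> 0" "t \<ge> 1"
  shows "g dvd Pc g h t n r J"
  unfolding Pc_def
proof (rule dvd_sum)
  fix k assume "k \<in> {k\<in>{..<J}. lab h k = r}"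
  then have "k \<ge> 3" using lab_nz assms by auto
  then have "t * k \<noteq> 0" using assms by simp
  then show "g dvd blk g t n k * g ^ (t * k)" by (simp add: dvd_power)
qed

definition Sc :: "nat \<Rightarrow> nat \<Rightarrow> nat \<Rightarrow> nat \<Rightarrow> nat \<Rightarrow> nat" where
  "Sc g h t n J = (\<Sum>k\<in>{k\<in>{..<J}. lab h k \<noteq> 0}. blk g t n k * g ^ (t * (k - 1)))"

lemma Sc_mem:
  assumes g: "g \<ge> 2" and t: "t \<ge> 1" and yz: "yz \<in> A0 g (Wp h t 0)" "yz < g ^ t"
  shows "yz + Sc g h t n (j + 2) \<in> A0 g (Wp h t 0) \<and> yz + Sc g h t n (j + 2) < g ^ (t * (j + 1))"
proof (induction j)
  case 0
  have e: "{k\<in>{..<0 + 2}. lab h k \<noteq> 0} = {}" using lab_nz by fastforce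
  have "Sc g h t n (0 + 2) = 0" unfolding Sc_def e by simp
  then show ?case using yz by simp
next
  case (Suc j)
  let ?J = "j + 2"
  show ?case
  proof (cases "lab h ?J = 0")
    case False
    have set: "{k\<in>{..<Suc ?J}. lab h k \<noteq> 0} = insert ?J {k\<in>{..<?J}. lab h k \<noteq> 0}" using False by auto
    have eq: "yz + Sc g h t n (Suc ?J) = (yz + Sc g h t n ?J) + blk g t n ?J * g ^ (t * (j + 1))"
      unfolding Sc_def set by simp
    have l0: "lab h (j + 1) = 0" using lab_nz[OF False] by simp
    have W: "\<forall>i<t. t * (j + 1) + i \<in> Wp h t 0"
    proof (intro allI impI)
      fix i assume "i < t"
      then have "(t * (j + 1) + i) div t = j + 1"
        by (metis add.commute div_less div_mult_self2 gr_implies_not0 add_0)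
      then show "t * (j + 1) + i \<in> Wp h t 0" using l0 by (simp add: Wp_def)
    qed
    have "(yz + Sc g h t n ?J) + blk g t n ?J * g ^ (t * (j + 1)) \<in> A0 g (Wp h t 0) \<and>
          (yz + Sc g h t n ?J) + blk g t n ?J * g ^ (t * (j + 1)) < g ^ (t * (j + 1) + t)"
      using block_add[OF g, of "yz + Sc g h t n ?J" "Wp h t 0" "t * (j + 1)" t "blk g t n ?J"] Suc W blk_lt[OF g]
      by blast
    then show ?thesis using eq by (simp add: algebra_simps)
  next
    case True
    have set: "{k\<in>{..<Suc ?J}. lab h k \<noteq> 0} = {k\<in>{..<?J}. lab h k \<noteq> 0}" using True less_Suc_eq by auto
    have eq: "Sc g h t n (Suc ?J) = Sc g h t n ?J" unfolding Sc_def set by simp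
    have "g ^ (t * (j + 1)) \<le> g ^ (t * (Suc j + 1))" using g by (intro power_increasing) auto
    then show ?thesis using eq Suc by simp
  qed
qed

lemma Sc_eq:
  assumes "t \<ge> 1"
  shows "(\<Sum>k\<in>{k\<in>{..<J}. lab h k \<noteq> 0}. blk g t n k * g ^ (t * k)) = g ^ t * Sc g h t n J"
  unfolding Sc_def sum_distrib_left
proof (rule sum.cong)
  fix k assume "k \<in> {k\<in>{..<J}. lab h k \<noteq> 0}"
  then have "k \<ge> 1" using lab_nz by fastforce
  then have "t * k = t + t * (k - 1)" by (simp add: algebra_simps)
  then show "blk g t n k * g ^ (t * k) = g ^ t * (blk g t n k * g ^ (t * (k - 1)))"
    by (simp add: power_add)
qed simp

lemma Sc_dvd:
  assumes "t \<ge> 1"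
  shows "g dvd Sc g h t n J"
  unfolding Sc_def
proof (rule dvd_sum)
  fix k assume "k \<in> {k\<in>{..<J}. lab h k \<noteq> 0}"
  then have "k \<ge> 3" using lab_nz by auto
  then have "t * (k - 1) \<noteq> 0" using assms by simp
  then show "g dvd blk g t n k * g ^ (t * (k - 1))" by (simp add: dvd_power)
qed

lemma div_iff: "(t::nat) > 0 \<Longrightarrow> (f \<in> {t * k..<t * k + t}) \<longleftrightarrow> f div t = k"
proof
  assume t: "t > 0" and f: "f \<in> {t * k..<t * k + t}"
  then show "f div t = k" by (intro div_nat_eqI) auto
next
  assume t: "t > 0" and f: "f div t = k"
  have "t * (f div t) \<le> f" by simp
  moreover have "f < t * (f div t) + t" using t
    by (metis add.commute mod_less_divisor mod_mult_div_eq nat_add_left_cancel_less)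
  ultimately show "f \<in> {t * k..<t * k + t}" using f by auto
qed

lemma lab_inf:
  assumes h: "h \<ge> 2" and r: "r < h"
  shows "infinite {k. lab h k = r}"
  unfolding infinite_nat_iff_unbounded_le
proof
  fix m
  show "\<exists>n\<ge>m. n \<in> {k. lab h k = r}"
  proof (cases "r = 0")
    case True
    have "lab h (2 * m) = 0" unfolding lab_def by simp
    then show ?thesis using True by (intro exI[of _ "2 * m"]) auto
  next
    case False
    define n where "n = 3 + 2 * ((r - 1) + (h - 1) * m)"
    have "\<not> n \<le> 1" "odd n" unfolding n_def by auto
    moreover have "(n - 3) div 2 = (r - 1) + (h - 1) * m" unfolding n_def by simp
    moreover have "((r - 1) + (h - 1) * m) mod (h - 1) = r - 1"
    proof -
      have "r - 1 < h - 1" using r False by simp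
      then show ?thesis using mod_mult_self2[of "r - 1" "h - 1" m] by (metis mod_less)
    qed
    ultimately have "lab h n = r" unfolding lab_def using False by simp
    moreover have "n \<ge> m"
    proof -
      have "1 * m \<le> (h - 1) * m" using h by (intro mult_le_mono1) simp
      then have a: "m \<le> (h - 1) * m" by simp
      have b: "(h - 1) * m \<le> (r - 1) + (h - 1) * m" by simp
      have c: "(r - 1) + (h - 1) * m \<le> 3 + 2 * ((r - 1) + (h - 1) * m)" by simp
      show ?thesis unfolding n_def using a b c by (meson order.trans)
    qed
    ultimately show ?thesis by blast
  qed
qed

lemma long_intervals:
  assumes h: "h \<ge> 2" and r: "r < h" and t: "t \<ge> 1"
  shows "union_of_long_intervals t (Wp h t r)"
proof -
  define iv where "iv = (\<lambda>k. {t * k..<t * k + t})"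
  define I where "I = iv ` {k. lab h k = r}"
  have inj: "inj_on iv {k. lab h k = r}"
  proof (rule inj_onI)
    fix k k' assume "iv k = iv k'"
    then have "t * k = t * k'" unfolding iv_def using t by (simp add: atLeastLessThan_eq_iff)
    then show "k = k'" using t by simp
  qed
  have "infinite I" unfolding I_def using lab_inf[OF h r] inj finite_imageD by blast
  moreover have "\<Union>I = Wp h t r"
  proof
    show "\<Union>I \<subseteq> Wp h t r" unfolding I_def iv_def Wp_def using div_iff[of t] t by auto
  next
    show "Wp h t r \<subseteq> \<Union>I"
    proof
      fix f assume "f \<in> Wp h t r"
      then have "lab h (f div t) = r" by (simp add: Wp_def)
      moreover have "f \<in> iv (f div t)" unfolding iv_def using div_iff[of t f "f div t"] t by simp
      ultimately show "f \<in> \<Union>I" unfolding I_def by blast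
    qed
  qed
  moreover have "\<forall>J\<in>I. \<exists>a l. t \<le> l \<and> J = {a..<a + l}" unfolding I_def iv_def by blast
  moreover have "\<forall>J\<in>I. \<forall>K\<in>I. J \<noteq> K \<longrightarrow> J \<inter> K = {}"
  proof (intro ballI impI)
    fix J K assume "J \<in> I" "K \<in> I" "J \<noteq> K"
    then obtain k k' where "J = iv k" "K = iv k'" "k \<noteq> k'" unfolding I_def by blast
    show "J \<inter> K = {}"
    proof (rule ccontr)
      assume "J \<inter> K \<noteq> {}"
      then obtain f where "f \<in> iv k" "f \<in> iv k'" using \<open>J = iv k\<close> \<open>K = iv k'\<close> by blast
      then have "f div t = k" "f div t = k'" unfolding iv_def using div_iff[of t] t by auto
      then show False using \<open>k \<noteq> k'\<close> by simp
    qed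
  qed
  ultimately show ?thesis unfolding union_of_long_intervals_def by blast
qed

lemma basis_main:
  assumes g: "g \<ge> 2" and t: "t \<ge> 2" and hg: "g ^ t \<le> h" and h: "h \<ge> 2"
    and n: "n \<ge> h + g + 2"
  shows "\<exists>ys. length ys = h \<and> set ys \<subseteq> (\<Union>r<h. A_g g (Wp h t r)) - {1 + g} \<and> sum_list ys = n"
proof -
  let ?B = "(\<Union>r<h. A_g g (Wp h t r)) - {1 + g}"
  have t1: "t \<ge> 1" using t by simp
  define J where "J = n + 2"
  have "n < 2 ^ n" by (rule less_exp)
  also have "\<dots> \<le> g ^ n" using g by (intro power_mono) auto
  also have "\<dots> \<le> g ^ (t * J)"
  proof -
    have "1 * n \<le> t * n" using t by (intro mult_le_mono1) simp
    also have "t * n \<le> t * J" unfolding J_def by simp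
    finally have "n \<le> t * J" by simp
    then show ?thesis using g by (intro power_increasing) auto
  qed
  finally have nJ: "n < g ^ (t * J)" .
  have nsum: "n = (\<Sum>k<J. blk g t n k * g ^ (t * k))" using expand[where J=J and g=g and t=t and n=n] nJ by simp
  have hn: "h \<le> n" using n by simp
  show ?thesis
  proof (cases "Pc g h t n 0 J = 1 + g")
    case False
    define rs where "rs = filter (\<lambda>r. Pc g h t n r J \<noteq> 0) [0..<h]"
    define xs where "xs = map (\<lambda>r. Pc g h t n r J) rs"
    have "sum_list xs = (\<Sum>r\<in>set rs. Pc g h t n r J)"
      unfolding xs_def by (rule sum_list_distinct_conv_sum_set) (simp add: rs_def)
    also have "set rs = {r\<in>{..<h}. Pc g h t n r J \<noteq> 0}" unfolding rs_def by auto
    also have "(\<Sum>r\<in>{r\<in>{..<h}. Pc g h t n r J \<noteq> 0}. Pc g h t n r J) = (\<Sum>r<h. Pc g h t n r J)"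
      by (rule sum.mono_neutral_left) auto
    also have "\<dots> = n" using Pc_sum[OF h] nsum by simp
    finally have sx: "sum_list xs = n" .
    have lx: "length xs \<le> h" unfolding xs_def rs_def by (simp add: order.trans[OF length_filter_le])
    have setx: "set xs \<subseteq> ?B"
    proof
      fix y assume "y \<in> set xs"
      then obtain r where r: "r < h" "Pc g h t n r J \<noteq> 0" and y: "y = Pc g h t n r J"
        unfolding xs_def rs_def by auto
      have "y \<in> A_g g (Wp h t r)" using Pc_mem[OF g t1, of h n r J] r y by (simp add: A0_def)
      moreover have "y \<noteq> 1 + g"
      proof (cases "r = 0")
        case True then show ?thesis using False y by simp
      next
        case nz: False
        have "g dvd y" using Pc_dvd[OF nz t1] y by simp
        then show ?thesis using not_dvd_x[OF g] by metis
      qed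
      ultimately show "y \<in> ?B" using r by blast
    qed
    show ?thesis using pad[OF g h setx lx] sx hn by simp
  next
    case True
    define S where "S = Sc g h t n J"
    have fin: "finite {..<J}" by simp
    have "(\<Sum>k<J. blk g t n k * g ^ (t * k)) =
          (\<Sum>k\<in>{k\<in>{..<J}. lab h k = 0}. blk g t n k * g ^ (t * k)) +
          (\<Sum>k\<in>{k\<in>{..<J}. lab h k \<noteq> 0}. blk g t n k * g ^ (t * k))"
    proof -
      have u: "{..<J} = {k\<in>{..<J}. lab h k = 0} \<union> {k\<in>{..<J}. lab h k \<noteq> 0}" by auto
      show ?thesis by (subst u, rule sum.union_disjoint) auto
    qed
    then have nS: "n = (1 + g) + g ^ t * S"
      using nsum True Sc_eq[OF t1, where J=J and h=h and g=g and n=n] unfolding Pc_def S_def by simp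
    have Snz: "S \<noteq> 0"
    proof
      assume "S = 0"
      then have "n = 1 + g" using nS by simp
      then show False using n by simp
    qed
    have x0: "1 + g \<in> A_g g (Wp h t 0)"
    proof -
      have "0 \<in> Wp h t 0" "1 \<in> Wp h t 0" using t by (auto simp: Wp_def lab_def)
      then have "(\<Sum>f\<in>{0, 1}. (\<lambda>_. 1::nat) f * g ^ f) \<in> A_g g (Wp h t 0)" unfolding A_g_def
        apply (intro CollectI)
        apply (rule exI[of _ "{0,1::nat}"])
        apply (rule exI[of _ "\<lambda>_. 1::nat"])
        using g by auto
      then show ?thesis by simp
    qed
    have xlt: "1 + g < g ^ t"
    proof -
      have "2 * g \<le> g * g" using g by (intro mult_le_mono1)
      then have "1 + g < g * g" using g by linarith
      also have "g * g = g ^ 2" by (simp add: power2_eq_square)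
      also have "\<dots> \<le> g ^ t" using g t by (intro power_increasing) auto
      finally show ?thesis .
    qed
    have gt: "g ^ t \<ge> 1" using g by simp
    have S0: "0 + Sc g h t n (n + 2) \<in> A0 g (Wp h t 0)"
      using Sc_mem[where yz=0 and h=h and n=n and j=n, OF g t1] gt g by (simp add: A0_def)
    have SA: "S \<in> A_g g (Wp h t 0)" using S0 Snz unfolding S_def J_def by (simp add: A0_def)
    have xS0: "(1 + g) + Sc g h t n (n + 2) \<in> A0 g (Wp h t 0)"
      using Sc_mem[where yz="1 + g" and h=h and n=n and j=n, OF g t1] x0 xlt g by (simp add: A0_def)
    have xSA: "(1 + g) + S \<in> A_g g (Wp h t 0)" using xS0 unfolding S_def J_def by (simp add: A0_def)
    have "g dvd S" using Sc_dvd[OF t1] unfolding S_def by simp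
    then have Sx: "S \<noteq> 1 + g" using not_dvd_x[OF g] by metis
    have r0: "0 < h" using h by simp
    have SB: "S \<in> ?B" using SA Sx r0 by blast
    have xSB: "(1 + g) + S \<in> ?B" using xSA Snz r0 by auto
    define xs where "xs = ((1 + g) + S) # replicate (g ^ t - 1) S"
    have setx: "set xs \<subseteq> ?B" unfolding xs_def using SB xSB by auto
    have lx: "length xs \<le> h" unfolding xs_def using hg gt by simp
    have "sum_list xs = (1 + g) + S + (g ^ t - 1) * S" unfolding xs_def by (simp add: sum_list_replicate)
    also have "\<dots> = (1 + g) + g ^ t * S"
    proof -
      have "(g ^ t - 1) * S + S = (g ^ t - 1 + 1) * S" by simp
      also have "g ^ t - 1 + 1 = g ^ t" using gt by simp
      finally show ?thesis by simp
    qed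
    finally have sx: "sum_list xs = n" using nS by simp
    show ?thesis using pad[OF g h setx lx] sx hn by simp
  qed
qed

lemma hbound:
  fixes g h t :: nat
  assumes "g \<ge> 2" and "2 \<le> t" and "real t \<le> ln (real h) / ln (real g)"
  shows "g ^ t \<le> h"
proof -
  have lg: "ln (real g) > 0" using assms(1) by simp
  have "real t * ln (real g) \<le> ln (real h)" using assms(3) lg by (simp add: le_divide_eq)
  moreover have "real t * ln (real g) > 0" using lg assms(2) by simp
  ultimately have lh: "ln (real h) > 0" by linarith
  have hp: "h > 0"
  proof (rule ccontr)
    assume "\<not> h > 0" then have "h = 0" by simp
    then show False using lh by simp
  qed
  have "ln (real (g ^ t)) = real t * ln (real g)" by (simp add: ln_realpow)
  then have "ln (real (g ^ t)) \<le> ln (real h)" using \<open>real t * ln (real g) \<le> ln (real h)\<close> by simp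
  then have "real (g ^ t) \<le> real h" using hp assms(1) by (subst (asm) ln_le_cancel_iff) auto
  then show ?thesis by simp
qed

theorem theorem1:
  fixes g h t :: nat
  assumes "g \<ge> 2" and "2 \<le> t" and "real t \<le> ln (real h) / ln (real g)"
  shows "\<exists>W :: nat \<Rightarrow> nat set.
           (\<forall>r<h. \<forall>s<h. r \<noteq> s \<longrightarrow> W r \<inter> W s = {}) \<and>
           (\<Union>r<h. W r) = UNIV \<and>
           (\<forall>r<h. union_of_long_intervals t (W r)) \<and>
           \<not> minimal_asymptotic_basis h (\<Union>r<h. A_g g (W r))"
proof -
  have g: "g \<ge> 2" and t: "t \<ge> 2" using assms by auto
  have hg: "g ^ t \<le> h" using hbound[OF assms] .
  have "2 \<le> g ^ 1" using g by simp
  also have "g ^ 1 \<le> g ^ t" using g t by (intro power_increasing) auto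
  finally have h: "h \<ge> 2" using hg by linarith
  let ?W = "Wp h t"
  let ?A = "\<Union>r<h. A_g g (?W r)"
  let ?B = "?A - {1 + g}"
  have disj: "\<forall>r<h. \<forall>s<h. r \<noteq> s \<longrightarrow> ?W r \<inter> ?W s = {}" by (auto simp: Wp_def)
  have cover: "(\<Union>r<h. ?W r) = UNIV"
  proof -
    have "\<forall>f. f \<in> ?W (lab h (f div t)) \<and> lab h (f div t) < h" using lab_lt[OF h] by (simp add: Wp_def)
    then show ?thesis by blast
  qed
  have long: "\<forall>r<h. union_of_long_intervals t (?W r)" using long_intervals[OF h] t by simp
  have x0: "1 + g \<in> A_g g (?W 0)"
  proof -
    have "0 \<in> ?W 0" "1 \<in> ?W 0" using t by (auto simp: Wp_def lab_def)
    then have "(\<Sum>f\<in>{0, 1}. (\<lambda>_. 1::nat) f * g ^ f) \<in> A_g g (?W 0)" unfolding A_g_def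
      apply (intro CollectI)
      apply (rule exI[of _ "{0,1::nat}"])
      apply (rule exI[of _ "\<lambda>_. 1::nat"])
      using g by auto
    then show ?thesis by simp
  qed
  have xA: "1 + g \<in> ?A" using x0 h by auto
  have sub: "?B \<subset> ?A" using xA by blast
  have basis: "asymptotic_basis h ?B"
    unfolding asymptotic_basis_def
  proof (intro exI[of _ "h + g + 2"] allI impI)
    fix n assume n: "n \<ge> h + g + 2"
    obtain ys where ys: "length ys = h" "set ys \<subseteq> ?B" "sum_list ys = n"
      using basis_main[OF g t hg h n] by blast
    let ?S = "{xs :: nat list. length xs = h \<and> set xs \<subseteq> ?B \<and> sum_list xs = n}"
    have "?S \<subseteq> {xs. set xs \<subseteq> {0..n} \<and> length xs = h}"
    proof
      fix xs assume "xs \<in> ?S"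
      then have "\<forall>y\<in>set xs. y \<le> n" using member_le_sum_list[of _ xs] by auto
      then show "xs \<in> {xs. set xs \<subseteq> {0..n} \<and> length xs = h}" using \<open>xs \<in> ?S\<close> by auto
    qed
    then have fin: "finite ?S" using finite_lists_length_eq[of "{0..n}" h] finite_subset by blast
    have "ys \<in> ?S" using ys by simp
    then have "card ?S > 0" using fin card_gt_0_iff by blast
    then show "rep h ?B n \<ge> 1" unfolding rep_def by simp
  qed
  have "\<not> minimal_asymptotic_basis h ?A"
    unfolding minimal_asymptotic_basis_def using sub basis by blast
  then show ?thesis using disj cover long by blast
qed

end
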